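(* For every integer $e\ge2$, the function $\Omega_e=\mathrm{Sh}_{1-2e^{-1}}(\Omega)$ is convex.
   Context: $\Omega(s)=\frac2\pi(s\arcsin\frac s2+\sqrt{4-s^2})$ for $|s|\le2$ and $\Omega(s)=|s|$ otherwise; $\Omega$ is $C^1$, even, equal to $|s|$ for $|s|\ge2$ and strictly convex on $[-2,2]$. For such a function $f$ (with $a=2$) and $\alpha\in[0,1)$: $F_\alpha(s)=f(s)-\alpha s$, $x_\alpha^+=(f')^{-1}(\alpha)\in[0,a)$ (inverse of $f':[-a,a]\to[-1,1]$); let $F_\alpha^{-1}$ be the inverse of $F_\alpha|_{[x_\alpha^+,\infty)}$, $\phi=F_\alpha^{-1}\circ F_\alpha$, $\delta_x=(1-\alpha)^{-1}F_\alpha(x)-\phi(x)$, $s_\alpha=x_\alpha^++\delta_{x_\alpha^+}$; $x\mapsto x+\delta_x$ is an increasing bijection $(-\infty,x_\alpha^+]\to(-\infty,s_\alpha]$ with inverse $\tau$. Define $\mathrm{Sh}_\alpha(f)(x)=\alpha x+F_\alpha(\tau(x))$ for $x\le s_\alpha$ and $=x$ for $x>s_\alpha$. *)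

theory Defs
  imports "HOL-Analysis.Analysis"
begin

definition Omega :: "real \<Rightarrow> real" where
  "Omega s = (if \<bar>s\<bar> \<le> 2 then (2 / pi) * (s * arcsin (s / 2) + sqrt (4 - s\<^sup>2)) else \<bar>s\<bar>)"

text \<open>The shift construction Sh_alpha(f), for a C^1 even function f equal to |s| for |s| >= a
  and strictly convex on [-a,a].\<close>
definition F_al :: "(real \<Rightarrow> real) \<Rightarrow> real \<Rightarrow> real \<Rightarrow> real" where
  "F_al f \<alpha> s = f s - \<alpha> * s"

definition xplus :: "(real \<Rightarrow> real) \<Rightarrow> real \<Rightarrow> real \<Rightarrow> real" where
  "xplus f a \<alpha> = (THE x. x \<in> {-a..a} \<and> deriv f x = \<alpha>)"

definition F_inv :: "(real \<Rightarrow> real) \<Rightarrow> real \<Rightarrow> real \<Rightarrow> real \<Rightarrow> real" where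
  "F_inv f a \<alpha> y = (THE z. xplus f a \<alpha> \<le> z \<and> F_al f \<alpha> z = y)"

definition phi_al :: "(real \<Rightarrow> real) \<Rightarrow> real \<Rightarrow> real \<Rightarrow> real \<Rightarrow> real" where
  "phi_al f a \<alpha> x = F_inv f a \<alpha> (F_al f \<alpha> x)"

definition delta_al :: "(real \<Rightarrow> real) \<Rightarrow> real \<Rightarrow> real \<Rightarrow> real \<Rightarrow> real" where
  "delta_al f a \<alpha> x = F_al f \<alpha> x / (1 - \<alpha>) - phi_al f a \<alpha> x"

definition s_al :: "(real \<Rightarrow> real) \<Rightarrow> real \<Rightarrow> real \<Rightarrow> real" where
  "s_al f a \<alpha> = xplus f a \<alpha> + delta_al f a \<alpha> (xplus f a \<alpha>)"

definition tau_al :: "(real \<Rightarrow> real) \<Rightarrow> real \<Rightarrow> real \<Rightarrow> real \<Rightarrow> real" where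
  "tau_al f a \<alpha> x = (THE y. y \<le> xplus f a \<alpha> \<and> y + delta_al f a \<alpha> y = x)"

definition Sh :: "(real \<Rightarrow> real) \<Rightarrow> real \<Rightarrow> real \<Rightarrow> real \<Rightarrow> real" where
  "Sh f a \<alpha> x = (if x \<le> s_al f a \<alpha> then \<alpha> * x + F_al f \<alpha> (tau_al f a \<alpha> x) else x)"

end

theory Submission
  imports Defs
begin


lemma Sh_convex_general:
  fixes f :: "real \<Rightarrow> real" and a \<alpha> :: real
  assumes al: "0 \<le> \<alpha>" "\<alpha> < 1"
  and Fconv: "convex_on UNIV (F_al f \<alpha>)"
  and Fcont: "continuous_on UNIV (F_al f \<alpha>)"
  and Fdec: "\<And>y1 y2. y1 \<le> y2 \<Longrightarrow> y2 \<le> xplus f a \<alpha> \<Longrightarrow> F_al f \<alpha> y2 \<le> F_al f \<alpha> y1"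
  and Finc: "\<And>z1 z2. xplus f a \<alpha> \<le> z1 \<Longrightarrow> z1 < z2 \<Longrightarrow> F_al f \<alpha> z1 < F_al f \<alpha> z2"
  and Flip: "\<And>z1 z2. z1 \<le> z2 \<Longrightarrow> F_al f \<alpha> z2 - F_al f \<alpha> z1 \<le> (1-\<alpha>)*(z2 - z1)"
  and Funb: "\<And>c. \<exists>z \<ge> xplus f a \<alpha>. F_al f \<alpha> z \<ge> c"
  shows "convex_on UNIV (Sh f a \<alpha>)"
proof -
  define F where "F = F_al f \<alpha>"
  define x0 where "x0 = xplus f a \<alpha>"
  define Fi where "Fi = F_inv f a \<alpha>"
  define k where "k = 1 - \<alpha>"
  have k: "k > 0" using al by (simp add: k_def)
  have Fdec': "\<And>y1 y2. y1 \<le> y2 \<Longrightarrow> y2 \<le> x0 \<Longrightarrow> F y2 \<le> F y1"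
    using Fdec by (simp add: F_def x0_def)
  have Finc': "\<And>z1 z2. x0 \<le> z1 \<Longrightarrow> z1 < z2 \<Longrightarrow> F z1 < F z2"
    using Finc by (simp add: F_def x0_def)
  have Finc2: "\<And>z1 z2. x0 \<le> z1 \<Longrightarrow> z1 \<le> z2 \<Longrightarrow> F z1 \<le> F z2"
    using Finc' by (metis order_le_less)
  have Flip': "\<And>z1 z2. z1 \<le> z2 \<Longrightarrow> F z2 - F z1 \<le> k*(z2 - z1)"
    using Flip by (simp add: F_def k_def)
  have Funb': "\<And>c. \<exists>z \<ge> x0. F z \<ge> c"
    using Funb by (simp add: F_def x0_def)
  have Fcont': "continuous_on S F" for S
    using Fcont continuous_on_subset by (fastforce simp: F_def)
  have Fi_def': "Fi c = (THE z. x0 \<le> z \<and> F z = c)" for c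
    by (simp add: Fi_def F_inv_def x0_def F_def)
  have uniq: "w = z" if "x0 \<le> w" "x0 \<le> z" "F w = F z" for w z
    using Finc'[of w z] Finc'[of z w] that by (metis linorder_neqE_linordered_idom order_less_irrefl)
  have Fi1: "x0 \<le> Fi c \<and> F (Fi c) = c" if cge: "F x0 \<le> c" for c
  proof -
    obtain Z where Z: "Z \<ge> x0" "F Z \<ge> c" using Funb'[of c] by auto
    obtain z where z: "x0 \<le> z" "z \<le> Z" "F z = c"
      using IVT'[OF cge Z(2) Z(1) Fcont'[of "{x0..Z}"]] by auto
    have e: "Fi c = z" unfolding Fi_def'
    proof (rule the_equality)
      show "x0 \<le> z \<and> F z = c" using z by simp
      fix w assume "x0 \<le> w \<and> F w = c" then show "w = z" using uniq z by metis
    qed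
    then show ?thesis using z by simp
  qed
  have Fi2: "Fi (F z) = z" if "x0 \<le> z" for z
    unfolding Fi_def' by (rule the_equality) (use that uniq in metis)+
  define phi where "phi y = Fi (F y)" for y
  have phi1: "x0 \<le> phi y \<and> F (phi y) = F y" if "y \<le> x0" for y
    using Fi1 Fdec'[OF that order_refl] by (simp add: phi_def)
  have phix0: "phi x0 = x0" using Fi2 by (simp add: phi_def)
  define Psi where "Psi y = y + (F y / k - phi y)" for y
  have delta: "delta_al f a \<alpha> y = F y / k - phi y" for y
    by (simp add: delta_al_def phi_al_def phi_def Fi_def F_def k_def)
  define s where "s = F x0 / k"
  have s_eq: "s_al f a \<alpha> = s"
    by (simp add: s_al_def delta x0_def[symmetric] phix0 s_def)
  have tau_def': "tau_al f a \<alpha> X = (THE y. y \<le> x0 \<and> Psi y = X)" for X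
    by (simp add: tau_al_def delta Psi_def x0_def)
  have Psi_mono: "Psi y1 < Psi y2" if "y1 < y2" "y2 \<le> x0" for y1 y2
  proof -
    have p1: "x0 \<le> phi y1" "F (phi y1) = F y1" using phi1 that by auto
    have p2: "x0 \<le> phi y2" "F (phi y2) = F y2" using phi1 that by auto
    have "F y2 \<le> F y1" using Fdec' that by auto
    then have "phi y2 \<le> phi y1" using p1 p2 Finc'[of "phi y1" "phi y2"] by force
    then have "F y1 - F y2 \<le> k * (phi y1 - phi y2)" using Flip' p1 p2 by metis
    then have "(F y1 - F y2) / k \<le> phi y1 - phi y2" using k by (simp add: divide_le_eq mult.commute)
    then have "F y1 / k - phi y1 \<le> F y2 / k - phi y2" by (simp add: diff_divide_distrib)
    then show ?thesis using that by (simp add: Psi_def)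
  qed
  have Psi_bound: "Psi y \<le> y + s - x0" if "y \<le> x0" for y
  proof -
    have p1: "x0 \<le> phi y" "F (phi y) = F y" using phi1 that by auto
    have "F y - F x0 \<le> k * (phi y - x0)" using Flip' p1 by metis
    then have "(F y - F x0) / k \<le> phi y - x0" using k by (simp add: divide_le_eq mult.commute)
    then show ?thesis by (simp add: Psi_def s_def diff_divide_distrib)
  qed
  have Psi_x0: "Psi x0 = s" by (simp add: Psi_def phix0 s_def)
  have Psi_cont: "continuous_on {Y..x0} Psi" if "Y \<le> x0" for Y
  proof -
    obtain M where M: "M \<ge> x0" "F M \<ge> F Y" using Funb'[of "F Y"] by auto
    have ci: "continuous_on (F ` {x0..M}) Fi"
      by (rule continuous_on_inv) (use Fcont' Fi2 in auto)
    have sub: "F ` {Y..x0} \<subseteq> F ` {x0..M}"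
    proof
      fix v assume "v \<in> F ` {Y..x0}"
      then obtain y where y: "Y \<le> y" "y \<le> x0" "v = F y" by auto
      have "F x0 \<le> F y" "F y \<le> F Y" using Fdec' y by auto
      then obtain z where "x0 \<le> z" "z \<le> M" "F z = F y"
        using IVT'[of F x0 "F y" M] M Fcont'[of "{x0..M}"] \<open>F x0 \<le> F y\<close> \<open>F y \<le> F Y\<close> by auto
      then show "v \<in> F ` {x0..M}" using y by (metis atLeastAtMost_iff image_eqI)
    qed
    have "continuous_on {Y..x0} phi"
      unfolding phi_def by (rule continuous_on_compose2[OF ci Fcont' sub])
    then show ?thesis unfolding Psi_def using k
      by (intro continuous_intros Fcont') auto
  qed
  define tau where "tau = tau_al f a \<alpha>"
  have tau1: "tau X \<le> x0 \<and> Psi (tau X) = X" if Xs: "X \<le> s" for X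
  proof -
    define Y where "Y = min x0 (X - s + x0)"
    have Y: "Y \<le> x0" by (simp add: Y_def)
    have "Psi Y \<le> X" using Psi_bound[OF Y] by (simp add: Y_def)
    then obtain y where y: "Y \<le> y" "y \<le> x0" "Psi y = X"
      using IVT'[of Psi Y X x0] Psi_cont[OF Y] Y Psi_x0 Xs by auto
    have u: "w = y" if "w \<le> x0" "Psi w = X" for w
      using Psi_mono[of w y] Psi_mono[of y w] that y by (metis linorder_neqE_linordered_idom order_less_irrefl)
    have e: "tau X = y" unfolding tau_def tau_def'
    proof (rule the_equality)
      show "y \<le> x0 \<and> Psi y = X" using y by simp
      fix w assume "w \<le> x0 \<and> Psi w = X" then show "w = y" using u by blast
    qed
    then show ?thesis using y by simp
  qed
  have Sh_le: "Sh f a \<alpha> X = \<alpha>*X + F (tau X)" if "X \<le> s" for X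
    using that by (simp add: Sh_def s_eq F_def tau_def)
  have Sh_gt: "Sh f a \<alpha> X = X" if "s < X" for X
    using that by (simp add: Sh_def s_eq)
  define feas where "feas X c \<longleftrightarrow> (\<exists>y z. F y \<le> c \<and> F z \<le> c \<and> c / k + y - z \<le> X)" for X c
  have K1: "X \<le> Sh f a \<alpha> X" for X
  proof (cases "X \<le> s")
    case True
    let ?y = "tau X"
    have t: "?y \<le> x0" "Psi ?y = X" using tau1 True by auto
    have p: "x0 \<le> phi ?y" using phi1 t by auto
    have "X = ?y + F ?y / k - phi ?y" using t by (simp add: Psi_def)
    then have "k * X = k * (?y - phi ?y) + F ?y" using k by (simp add: field_simps)
    moreover have "k * (?y - phi ?y) \<le> 0" using k t p by (simp add: mult_nonneg_nonpos)
    ultimately have "k * X \<le> F ?y" by linarith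
    then show ?thesis using Sh_le[OF True] by (simp add: k_def algebra_simps)
  next
    case False
    then show ?thesis using Sh_gt by simp
  qed
  have K2: "\<exists>c. feas X c \<and> \<alpha>*X + c \<le> Sh f a \<alpha> X" for X
  proof (cases "X \<le> s")
    case True
    let ?y = "tau X"
    have t: "?y \<le> x0" "Psi ?y = X" using tau1 True by auto
    have p: "F (phi ?y) = F ?y" using phi1 t by auto
    have "feas X (F ?y)" unfolding feas_def
      by (rule exI[of _ ?y], rule exI[of _ "phi ?y"]) (use t p in \<open>auto simp: Psi_def\<close>)
    then show ?thesis using Sh_le[OF True] by auto
  next
    case False
    have "feas X (F x0)" unfolding feas_def
      by (rule exI[of _ x0], rule exI[of _ x0]) (use False in \<open>auto simp: s_def\<close>)
    moreover have "\<alpha>*X + F x0 \<le> X"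
    proof -
      have "F x0 = k * s" using k by (simp add: s_def)
      also have "\<dots> \<le> k * X" using False k by simp
      finally show ?thesis by (simp add: k_def algebra_simps)
    qed
    ultimately show ?thesis using Sh_gt False by auto
  qed
  have K3: "Sh f a \<alpha> X \<le> \<alpha>*X + c" if Xs: "X \<le> s" and fc: "feas X c" for X c
  proof -
    obtain y z where yz: "F y \<le> c" "F z \<le> c" "c / k + y - z \<le> X" using fc feas_def by auto
    define y0 where "y0 = tau X"
    have t: "y0 \<le> x0" "Psi y0 = X" using tau1 that(1) by (auto simp: y0_def)
    define z0 where "z0 = phi y0"
    have p: "x0 \<le> z0" "F z0 = F y0" using phi1 t by (auto simp: z0_def)
    have X: "X = y0 + F y0 / k - z0" using t by (simp add: Psi_def z0_def)
    have "F y0 \<le> c"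
    proof (rule ccontr)
      assume c: "\<not> F y0 \<le> c"
      have "y0 < y"
      proof (rule ccontr)
        assume "\<not> y0 < y"
        then have "F y0 \<le> F y" using Fdec' t by auto
        then show False using c yz by auto
      qed
      have "z < z0"
      proof (rule ccontr)
        assume "\<not> z < z0"
        then have "F z0 \<le> F z" using Finc2[of z0 z] p by linarith
        then show False using c yz p by auto
      qed
      then have "F z0 - F z \<le> k * (z0 - z)" using Flip' by auto
      then have "F y0 - c \<le> k * (z0 - z)" using p yz by auto
      then have "(F y0 - c) / k \<le> z0 - z" using k by (simp add: divide_le_eq mult.commute)
      then have "F y0 / k - c / k \<le> z0 - z" by (simp add: diff_divide_distrib)
      then have "X < c / k + y - z" using X \<open>y0 < y\<close> by linarith
      then show False using yz by linarith
    qed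
    then show ?thesis using Sh_le[OF that(1)] by (simp add: y0_def)
  qed
  have comb: "feas ((1-t)*x + t*y) ((1-t)*c1 + t*c2)"
    if f1: "feas x c1" and f2: "feas y c2" and "0 < t" "t < 1" for x y c1 c2 t
  proof -
    obtain y1 z1 where 1: "F y1 \<le> c1" "F z1 \<le> c1" "c1 / k + y1 - z1 \<le> x" using f1 feas_def by auto
    obtain y2 z2 where 2: "F y2 \<le> c2" "F z2 \<le> c2" "c2 / k + y2 - z2 \<le> y" using f2 feas_def by auto
    have cv: "F ((1-t)*u1 + t*u2) \<le> (1-t) * F u1 + t * F u2" for u1 u2
      using convex_onD[OF Fconv[folded F_def], of t u1 u2] that by simp
    have a1: "F ((1-t)*y1 + t*y2) \<le> (1-t)*c1 + t*c2"
      using cv[of y1 y2] 1 2 that by (smt (verit) mult_left_mono)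
    have a2: "F ((1-t)*z1 + t*z2) \<le> (1-t)*c1 + t*c2"
      using cv[of z1 z2] 1 2 that by (smt (verit) mult_left_mono)
    have e: "((1-t)*c1 + t*c2) / k + ((1-t)*y1 + t*y2) - ((1-t)*z1 + t*z2)
       = (1-t)*(c1 / k + y1 - z1) + t*(c2 / k + y2 - z2)"
      using k by (simp add: field_simps)
    have "(1-t)*(c1 / k + y1 - z1) + t*(c2 / k + y2 - z2) \<le> (1-t)*x + t*y"
      using 1 2 that by (smt (verit) mult_left_mono)
    then show ?thesis unfolding feas_def using a1 a2 e by metis
  qed
  show ?thesis
  proof (rule convex_onI)
    fix t x y :: real
    assume t: "0 < t" "t < 1"
    define X where "X = (1-t)*x + t*y"
    have "Sh f a \<alpha> X \<le> (1-t) * Sh f a \<alpha> x + t * Sh f a \<alpha> y"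
    proof (cases "X \<le> s")
      case True
      obtain c1 where c1: "feas x c1" "\<alpha>*x + c1 \<le> Sh f a \<alpha> x" using K2 by blast
      obtain c2 where c2: "feas y c2" "\<alpha>*y + c2 \<le> Sh f a \<alpha> y" using K2 by blast
      have "Sh f a \<alpha> X \<le> \<alpha>*X + ((1-t)*c1 + t*c2)"
        using K3[OF True comb[OF c1(1) c2(1) t, folded X_def]] by simp
      also have "\<dots> = (1-t)*(\<alpha>*x + c1) + t*(\<alpha>*y + c2)" by (simp add: X_def algebra_simps)
      also have "\<dots> \<le> (1-t) * Sh f a \<alpha> x + t * Sh f a \<alpha> y"
        using c1 c2 t by (smt (verit) mult_left_mono)
      finally show ?thesis .
    next
      case False
      then have "Sh f a \<alpha> X = X" using Sh_gt by auto
      also have "\<dots> \<le> (1-t) * Sh f a \<alpha> x + t * Sh f a \<alpha> y"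
        using K1[of x] K1[of y] t unfolding X_def by (smt (verit) mult_left_mono)
      finally show ?thesis .
    qed
    then show "Sh f a \<alpha> ((1 - t) *\<^sub>R x + t *\<^sub>R y) \<le> (1 - t) * Sh f a \<alpha> x + t * Sh f a \<alpha> y"
      by (simp add: X_def)
  qed simp
qed



definition DO :: "real \<Rightarrow> real" where
  "DO s = 2 / pi * arcsin (max (-1) (min 1 (s/2)))"

definition PO :: "real \<Rightarrow> real" where
  "PO s = 2 / pi * (s * arcsin (s / 2) + sqrt (4 - s\<^sup>2))"

lemma Omega_in: "\<bar>s\<bar> \<le> 2 \<Longrightarrow> Omega s = PO s"
  by (simp add: Omega_def PO_def)

lemma PO_2: "PO 2 = 2" and PO_m2: "PO (-2) = 2"
  by (simp_all add: PO_def arcsin_minus)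

lemma Omega_ge2: "s \<ge> 2 \<Longrightarrow> Omega s = s"
  by (cases "s = 2") (auto simp: Omega_def PO_2[unfolded PO_def])

lemma Omega_lem2: "s \<le> -2 \<Longrightarrow> Omega s = - s"
  by (cases "s = -2") (auto simp: Omega_def PO_m2[unfolded PO_def] arcsin_minus)

lemma DO_in: "\<bar>s\<bar> \<le> 2 \<Longrightarrow> DO s = 2 / pi * arcsin (s/2)"
  by (simp add: DO_def)

lemma DO_ge2: "s \<ge> 2 \<Longrightarrow> DO s = 1"
  by (simp add: DO_def)

lemma DO_lem2: "s \<le> -2 \<Longrightarrow> DO s = -1"
  by (simp add: DO_def arcsin_minus)

lemma DO_cont: "continuous_on UNIV DO"
  unfolding DO_def by (intro continuous_intros) auto

lemma DO_mono: "u \<le> v \<Longrightarrow> DO u \<le> DO v"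
  unfolding DO_def
  by (intro mult_left_mono arcsin_le_arcsin) auto

lemma DO_le1: "DO s \<le> 1"
proof -
  have "arcsin (max (-1) (min 1 (s/2))) \<le> pi/2" using arcsin_bounded[of "max (-1) (min 1 (s/2))"] by auto
  then show ?thesis unfolding DO_def by (simp add: field_simps)
qed

lemma PO_deriv:
  assumes "-2 < s" "s < 2"
  shows "DERIV PO s :> DO s"
proof -
  have "(2 - s) * (2 + s) > 0" using assms by simp
  then have s2: "s^2 < 4" by (simp add: power2_eq_square algebra_simps)
  have q: "sqrt (1 - (s/2)^2) = sqrt (4 - s^2) / 2"
  proof -
    have "1 - (s/2)^2 = (4 - s^2) / 4" by (simp add: field_simps power2_eq_square)
    then have "sqrt (1 - (s/2)^2) = sqrt (4 - s^2) / sqrt 4" by (simp only: real_sqrt_divide)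
    moreover have "sqrt (4::real) = 2"
    proof -
      have "sqrt (4::real) = sqrt (2^2)" by simp
      also have "\<dots> = 2" by (simp only: real_sqrt_abs)
      finally show ?thesis .
    qed
    ultimately show ?thesis by simp
  qed
  have pos: "sqrt (4 - s^2) > 0" using s2 by simp
  have h: "((\<lambda>s. s/2) has_real_derivative (1/2)) (at s)" by (auto intro!: derivative_eq_intros)
  have d1: "((\<lambda>s. arcsin (s/2)) has_real_derivative (inverse (sqrt (1 - (s/2)^2)) * (1/2))) (at s)"
    using DERIV_chain2[OF DERIV_arcsin[of "s/2"] h] assms by simp
  have d3: "((\<lambda>s. s * arcsin (s/2)) has_real_derivative (1 * arcsin (s/2) + inverse (sqrt (1 - (s/2)^2)) * (1/2) * s)) (at s)"
    using DERIV_mult[OF DERIV_ident d1] by simp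
  have h2: "((\<lambda>s. 4 - s^2) has_real_derivative (- (2 * s))) (at s)" by (auto intro!: derivative_eq_intros)
  have d2: "((\<lambda>s. sqrt (4 - s^2)) has_real_derivative (inverse (sqrt (4 - s^2)) / 2 * (- (2 * s)))) (at s)"
    using DERIV_chain2[OF DERIV_real_sqrt h2] s2 by simp
  have "((\<lambda>s. 2 / pi * (s * arcsin (s / 2) + sqrt (4 - s\<^sup>2))) has_real_derivative
     (2 / pi * ((1 * arcsin (s/2) + inverse (sqrt (1 - (s/2)^2)) * (1/2) * s) + inverse (sqrt (4 - s^2)) / 2 * (- (2 * s))))) (at s)"
    by (rule DERIV_cmult[OF DERIV_add[OF d3 d2]])
  also have "(\<lambda>s. 2 / pi * (s * arcsin (s / 2) + sqrt (4 - s\<^sup>2))) = PO"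
    by (rule ext) (simp add: PO_def)
  also have "2 / pi * ((1 * arcsin (s/2) + inverse (sqrt (1 - (s/2)^2)) * (1/2) * s) + inverse (sqrt (4 - s^2)) / 2 * (- (2 * s))) = DO s"
    unfolding q using pos assms by (simp add: DO_in field_simps)
  finally show ?thesis .
qed

lemma Omega_deriv_in:
  assumes "-2 < s" "s < 2"
  shows "DERIV Omega s :> DO s"
  by (rule has_field_derivative_transform_within_open[OF PO_deriv[OF assms], of "{-2<..<2}"])
     (use assms in \<open>auto simp: Omega_in\<close>)

lemma Omega_diff_deriv: "-2 < y \<Longrightarrow> y < 2 \<Longrightarrow> DERIV (\<lambda>y. Omega y - c) y :> DO y"
  using DERIV_diff[OF Omega_deriv_in DERIV_const, of y c] by simp

lemma PO_cont: "continuous_on {-2..2} PO"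
  unfolding PO_def by (intro continuous_intros) auto

lemma DO_tendsto: "(DO \<longlongrightarrow> DO x) (at x within S)"
proof -
  have "isCont DO x" using DO_cont by (simp add: continuous_on_eq_continuous_at)
  then have "(DO \<longlongrightarrow> DO x) (at x)" by (simp add: isCont_def)
  then show ?thesis by (rule tendsto_within_subset) simp
qed

lemma Omega_deriv_2: "DERIV Omega 2 :> DO 2"
proof -
  have O2: "Omega 2 = 2" by (simp add: Omega_ge2)
  have right: "((\<lambda>y. (Omega y - Omega 2)/(y - 2)) \<longlongrightarrow> 1) (at_right 2)"
  proof (rule tendsto_eventually)
    show "eventually (\<lambda>y. (Omega y - Omega 2)/(y - 2) = 1) (at_right 2)"
      by (rule eventually_at_rightI[of 2 3]) (auto simp: Omega_ge2)
  qed
  have PO_l: "(PO \<longlongrightarrow> PO 2) (at_left 2)"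
    by (rule continuous_on_Icc_at_leftD[OF PO_cont]) simp
  have ev: "eventually (\<lambda>y. PO y = Omega y) (at_left 2)"
    by (rule eventually_at_leftI[of 0]) (auto simp: Omega_in)
  have "(Omega \<longlongrightarrow> Omega 2) (at_left 2)"
    using PO_l tendsto_cong[OF ev] by (simp add: Omega_in)
  then have f0: "((\<lambda>y. Omega y - Omega 2) \<longlongrightarrow> 0) (at_left 2)"
    by (rule LIM_zero)
  have g0: "((\<lambda>y. y - 2) \<longlongrightarrow> (0::real)) (at_left 2)"
    by (rule LIM_zero) (rule tendsto_ident_at)
  have left: "((\<lambda>y. (Omega y - Omega 2)/(y - 2)) \<longlongrightarrow> 1) (at_left 2)"
  proof (rule lhopital_left[OF f0 g0, where f' = DO and g' = "\<lambda>_. 1"])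
    show "eventually (\<lambda>y::real. y - 2 \<noteq> 0) (at_left 2)"
      by (rule eventually_at_leftI[of 0]) auto
    show "eventually (\<lambda>y. (1::real) \<noteq> 0) (at_left 2)" by simp
    show "eventually (\<lambda>y. DERIV (\<lambda>y. Omega y - Omega 2) y :> DO y) (at_left 2)"
      by (rule eventually_at_leftI[of 0])
         (auto intro: Omega_diff_deriv)
    show "eventually (\<lambda>y. DERIV (\<lambda>y::real. y - 2) y :> 1) (at_left 2)"
      by (rule eventually_at_leftI[of 0]) (auto intro!: derivative_eq_intros)
    have "(DO \<longlongrightarrow> 1) (at_left 2)" using DO_tendsto[of 2 "{..<2}"] by (simp add: DO_ge2)
    then show "((\<lambda>y. DO y / 1) \<longlongrightarrow> 1) (at_left 2)" by simp
  qed
  have "((\<lambda>y. (Omega y - Omega 2)/(y - 2)) \<longlongrightarrow> 1) (at 2)"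
    by (rule filterlim_split_at[OF left right])
  then show ?thesis by (simp add: has_field_derivative_iff DO_ge2)
qed

lemma Omega_deriv_m2: "DERIV Omega (-2) :> DO (-2)"
proof -
  have left: "((\<lambda>y. (Omega y - Omega (-2))/(y - (-2))) \<longlongrightarrow> -1) (at_left (-2))"
  proof (rule tendsto_eventually)
    show "eventually (\<lambda>y. (Omega y - Omega (-2))/(y - (-2)) = -1) (at_left (-2))"
      by (rule eventually_at_leftI[of "-3"]) (auto simp: Omega_lem2 field_simps)
  qed
  have PO_r: "(PO \<longlongrightarrow> PO (-2)) (at_right (-2))"
    by (rule continuous_on_Icc_at_rightD[OF PO_cont]) simp
  have ev: "eventually (\<lambda>y. PO y = Omega y) (at_right (-2))"
    by (rule eventually_at_rightI[of _ 0]) (auto simp: Omega_in)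
  have "(Omega \<longlongrightarrow> Omega (-2)) (at_right (-2))"
    using PO_r tendsto_cong[OF ev] by (simp add: Omega_in)
  then have f0: "((\<lambda>y. Omega y - Omega (-2)) \<longlongrightarrow> 0) (at_right (-2))"
    by (rule LIM_zero)
  have g0: "((\<lambda>y. y - (-2)) \<longlongrightarrow> (0::real)) (at_right (-2))"
    by (rule LIM_zero) (rule tendsto_ident_at)
  have right: "((\<lambda>y. (Omega y - Omega (-2))/(y - (-2))) \<longlongrightarrow> -1) (at_right (-2))"
  proof (rule lhopital_right[OF f0 g0, where f' = DO and g' = "\<lambda>_. 1"])
    show "eventually (\<lambda>y::real. y - (-2) \<noteq> 0) (at_right (-2))"
      by (rule eventually_at_rightI[of _ 0]) auto
    show "eventually (\<lambda>y. (1::real) \<noteq> 0) (at_right (-2))" by simp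
    show "eventually (\<lambda>y. DERIV (\<lambda>y. Omega y - Omega (-2)) y :> DO y) (at_right (-2))"
      by (rule eventually_at_rightI[of _ 0])
         (auto intro: Omega_diff_deriv)
    show "eventually (\<lambda>y. DERIV (\<lambda>y::real. y - (-2)) y :> 1) (at_right (-2))"
      by (rule eventually_at_rightI[of _ 0]) (auto intro!: derivative_eq_intros)
    have "(DO \<longlongrightarrow> -1) (at_right (-2))" using DO_tendsto[of "-2" "{-2<..}"] by (simp add: DO_lem2)
    then show "((\<lambda>y. DO y / 1) \<longlongrightarrow> -1) (at_right (-2))" by simp
  qed
  have "((\<lambda>y. (Omega y - Omega (-2))/(y - (-2))) \<longlongrightarrow> -1) (at (-2))"
    by (rule filterlim_split_at[OF left right])
  then show ?thesis by (simp add: has_field_derivative_iff DO_lem2)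
qed

lemma Omega_deriv: "DERIV Omega s :> DO s"
proof -
  consider "s < -2" | "s = -2" | "-2 < s \<and> s < 2" | "s = 2" | "s > 2" by linarith
  then show ?thesis
  proof cases
    case 1
    have "DERIV (\<lambda>y. - y) s :> -1" by (auto intro!: derivative_eq_intros)
    then have "DERIV Omega s :> -1"
      by (rule has_field_derivative_transform_within_open[of _ _ _ "{..< -2}"])
         (use 1 in \<open>auto simp: Omega_lem2\<close>)
    then show ?thesis using 1 by (simp add: DO_lem2)
  next
    case 2 then show ?thesis using Omega_deriv_m2 by simp
  next
    case 3 then show ?thesis using Omega_deriv_in by simp
  next
    case 4 then show ?thesis using Omega_deriv_2 by simp
  next
    case 5
    have "DERIV (\<lambda>y. y) s :> 1" by (auto intro!: derivative_eq_intros)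
    then have "DERIV Omega s :> 1"
      by (rule has_field_derivative_transform_within_open[of _ _ _ "{2 <..}"])
         (use 5 in \<open>auto simp: Omega_ge2\<close>)
    then show ?thesis using 5 by (simp add: DO_ge2)
  qed
qed



lemma F_Omega_deriv: "DERIV (F_al Omega \<alpha>) s :> DO s - \<alpha>"
proof -
  have "DERIV (\<lambda>s. Omega s - \<alpha> * s) s :> DO s - \<alpha> * 1"
    by (rule DERIV_diff[OF Omega_deriv DERIV_cmult[OF DERIV_ident]])
  moreover have "(\<lambda>s. Omega s - \<alpha> * s) = F_al Omega \<alpha>" by (rule ext) (simp add: F_al_def)
  ultimately show ?thesis by simp
qed

lemma xplus_Omega:
  assumes "0 \<le> \<alpha>" "\<alpha> < 1"
  shows "xplus Omega 2 \<alpha> = 2 * sin (pi * \<alpha> / 2)"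
proof -
  define x where "x = 2 * sin (pi * \<alpha> / 2)"
  have dv: "deriv Omega y = DO y" for y by (rule DERIV_imp_deriv[OF Omega_deriv])
  have b1: "-(pi/2) \<le> pi * \<alpha> / 2" using assms pi_gt_zero mult_nonneg_nonneg[of pi \<alpha>] by linarith
  have "pi * \<alpha> \<le> pi * 1" using assms pi_gt_zero by (intro mult_left_mono) auto
  then have b2: "pi * \<alpha> / 2 \<le> pi/2" by simp
  have xin: "\<bar>x\<bar> \<le> 2" using sin_le_one[of "pi * \<alpha> / 2"] sin_ge_minus_one[of "pi * \<alpha> / 2"]
    unfolding x_def abs_le_iff by linarith
  have "DO x = 2 / pi * arcsin (sin (pi * \<alpha> / 2))" using DO_in[OF xin] by (simp add: x_def)
  also have "\<dots> = \<alpha>" by (simp add: arcsin_sin[OF b1 b2])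
  finally have Dx: "DO x = \<alpha>" .
  have u: "y = x" if "y \<in> {-2..2}" "DO y = \<alpha>" for y
  proof -
    have yin: "\<bar>y\<bar> \<le> 2" using that by auto
    have "2 / pi * arcsin (y/2) = \<alpha>" using that(2) DO_in[OF yin] by simp
    then have "arcsin (y/2) = pi * \<alpha> / 2" using pi_gt_zero by (simp add: field_simps)
    then have "sin (arcsin (y/2)) = sin (pi * \<alpha> / 2)" by (simp only:)
    moreover have "sin (arcsin (y/2)) = y/2" using yin by (intro sin_arcsin) auto
    ultimately show ?thesis by (simp add: x_def)
  qed
  show ?thesis unfolding xplus_def dv x_def[symmetric]
  proof (rule the_equality)
    show "x \<in> {- 2..2} \<and> DO x = \<alpha>" using xin Dx by auto
    fix y assume "y \<in> {- 2..2} \<and> DO y = \<alpha>" then show "y = x" using u by blast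
  qed
qed

lemma Sh_Omega_convex:
  assumes al: "0 \<le> \<alpha>" "\<alpha> < 1"
  shows "convex_on UNIV (Sh Omega 2 \<alpha>)"
proof -
  define x0 where "x0 = 2 * sin (pi * \<alpha> / 2)"
  have xp: "xplus Omega 2 \<alpha> = x0" using xplus_Omega[OF al] by (simp add: x0_def)
  have x0in: "\<bar>x0\<bar> \<le> 2" using sin_le_one[of "pi * \<alpha> / 2"] sin_ge_minus_one[of "pi * \<alpha> / 2"]
    unfolding x0_def abs_le_iff by linarith
  have Dx0: "DO x0 = \<alpha>"
  proof -
    have b1: "-(pi/2) \<le> pi * \<alpha> / 2" using al pi_gt_zero mult_nonneg_nonneg[of pi \<alpha>] by linarith
    have "pi * \<alpha> \<le> pi * 1" using al pi_gt_zero by (intro mult_left_mono) auto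
    then have b2: "pi * \<alpha> / 2 \<le> pi/2" by simp
    have "DO x0 = 2 / pi * arcsin (sin (pi * \<alpha> / 2))" using DO_in[OF x0in] by (simp add: x0_def)
    also have "\<dots> = \<alpha>" by (simp add: arcsin_sin[OF b1 b2])
    finally show ?thesis .
  qed
  have Dstrict: "\<alpha> < DO x" if "x0 < x" for x
  proof (cases "x \<ge> 2")
    case True then show ?thesis using DO_ge2 al by simp
  next
    case False
    then have xin: "\<bar>x\<bar> \<le> 2" using that x0in by auto
    have "arcsin (x0/2) < arcsin (x/2)"
      using x0in that False by (intro arcsin_less_arcsin) auto
    then have "2 / pi * arcsin (x0/2) < 2 / pi * arcsin (x/2)"
      using pi_gt_zero by (intro mult_strict_left_mono) auto
    then show ?thesis using Dx0 DO_in[OF xin] DO_in[OF x0in] by simp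
  qed
  let ?F = "F_al Omega \<alpha>"
  show ?thesis
  proof (rule Sh_convex_general[OF al])
    show "convex_on UNIV ?F"
      by (rule convex_on_realI[where f' = "\<lambda>s. DO s - \<alpha>"])
         (auto intro: F_Omega_deriv DO_mono)
    show "continuous_on UNIV ?F"
      by (rule DERIV_continuous_on) (use F_Omega_deriv in auto)
    show "?F y2 \<le> ?F y1" if "y1 \<le> y2" "y2 \<le> xplus Omega 2 \<alpha>" for y1 y2
    proof (rule DERIV_nonpos_imp_nonincreasing[OF that(1)])
      fix x assume "y1 \<le> x" "x \<le> y2"
      then have "DO x \<le> DO x0" using that xp by (intro DO_mono) auto
      then show "\<exists>y. DERIV ?F x :> y \<and> y \<le> 0"
        by (intro exI[of _ "DO x - \<alpha>"]) (use F_Omega_deriv[of \<alpha> x] Dx0 in auto)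
    qed
    show "?F z1 < ?F z2" if "xplus Omega 2 \<alpha> \<le> z1" "z1 < z2" for z1 z2
    proof (rule DERIV_pos_imp_increasing_open[OF that(2)])
      fix x assume "z1 < x" "x < z2"
      then have "\<alpha> < DO x" using that xp by (intro Dstrict) auto
      then show "\<exists>y. DERIV ?F x :> y \<and> 0 < y"
        by (intro exI[of _ "DO x - \<alpha>"]) (use F_Omega_deriv[of \<alpha> x] in auto)
    next
      show "continuous_on {z1..z2} ?F"
        by (rule DERIV_continuous_on) (use F_Omega_deriv in \<open>auto intro: has_field_derivative_at_within\<close>)
    qed
    show "?F z2 - ?F z1 \<le> (1 - \<alpha>) * (z2 - z1)" if "z1 \<le> z2" for z1 z2
    proof -
      have "(1 - \<alpha>) * z1 - ?F z1 \<le> (1 - \<alpha>) * z2 - ?F z2"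
      proof (rule DERIV_nonneg_imp_nondecreasing[OF that])
        fix x
        have "DERIV (\<lambda>z. (1 - \<alpha>) * z - ?F z) x :> (1 - \<alpha>) * 1 - (DO x - \<alpha>)"
          by (rule DERIV_diff[OF DERIV_cmult[OF DERIV_ident] F_Omega_deriv])
        moreover have "(1 - \<alpha>) * 1 - (DO x - \<alpha>) \<ge> 0" using DO_le1[of x] by simp
        ultimately show "\<exists>y. DERIV (\<lambda>z. (1 - \<alpha>) * z - ?F z) x :> y \<and> 0 \<le> y" by blast
      qed
      then show ?thesis by (simp add: algebra_simps)
    qed
    show "\<exists>z\<ge>xplus Omega 2 \<alpha>. c \<le> ?F z" for c
    proof -
      define z where "z = max 2 (c / (1 - \<alpha>))"
      have z2: "z \<ge> 2" by (simp add: z_def)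
      have "?F z = (1 - \<alpha>) * z" using Omega_ge2[OF z2] by (simp add: F_al_def algebra_simps)
      moreover have "(1 - \<alpha>) * z \<ge> (1 - \<alpha>) * (c / (1 - \<alpha>))"
        using al by (intro mult_left_mono) (auto simp: z_def)
      moreover have "(1 - \<alpha>) * (c / (1 - \<alpha>)) = c" using al by simp
      moreover have "z \<ge> xplus Omega 2 \<alpha>" using xp x0in z2 by auto
      ultimately show ?thesis by auto
    qed
  qed
qed

theorem corollary4p15:
  fixes e :: int
  assumes "e \<ge> 2"
  shows "convex_on UNIV (Sh Omega 2 (1 - 2 / real_of_int e))"
proof (rule Sh_Omega_convex)
  have e: "real_of_int e \<ge> 2" using assms by simp
  then have "2 / real_of_int e \<le> 1" by simp
  then show "0 \<le> 1 - 2 / real_of_int e" by simp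
  have "2 / real_of_int e > 0" using e by simp
  then show "1 - 2 / real_of_int e < 1" by simp
qed

end
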